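(* Let $a_0,a_1\in\mathbb{C}$ with $a_1\neq0$ such that the polynomial $f(x)=a_0+a_1x$ has no positive integer root, and let $\Lambda=a_0D+a_1DxD$. Then the monic polynomial sequences that are both $\Lambda$-Appell and orthogonal are exactly the Laguerre sequences with parameter $\alpha=a_0/a_1$, up to an affine transformation.
   Context: $\mathcal{P}$ is the space of complex polynomials, $D$ the derivative, $x$ multiplication by $x$, products are compositions. A monic polynomial sequence (MPS) is $\{B_n\}_{n\ge0}$ with $B_n$ monic of degree $n$. An MPS is $\Lambda$-Appell if $\Lambda B_{n+1}=\rho_nB_n$ for all $n\ge0$, where $\rho_n=(n+1)f(n+1)$. An MPS is orthogonal with respect to a linear functional $u$ on $\mathcal{P}$ if $\langle u,B_nB_m\rangle=0$ for $n\neq m$ and $\langle u,B_n^2\rangle\neq0$. The (monic) Laguerre sequence with parameter $\alpha\notin\mathbb{Z}^-$ is the monic orthogonal sequence whose functional $u$ satisfies $D(xu)+(x-\alpha-1)u=0$, where on functionals $\langle Du,p\rangle=-\langle u,p'\rangle$ and $\langle xu,p\rangle=\langle u,xp\rangle$. An affine transformation of an MPS $\{B_n\}$ is the MPS $\{c^{-n}B_n(cx+d)\}$ for constants $c\neq0$, $d$. *)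

theory Defs
  imports "HOL-Computational_Algebra.Polynomial"
begin

definition MPS :: "(nat \<Rightarrow> complex poly) \<Rightarrow> bool" where
  "MPS B \<longleftrightarrow> (\<forall>n. degree (B n) = n \<and> lead_coeff (B n) = 1)"

definition Lam :: "complex \<Rightarrow> complex \<Rightarrow> complex poly \<Rightarrow> complex poly" where
  "Lam a0 a1 p = smult a0 (pderiv p) + smult a1 (pderiv ([:0, 1:] * pderiv p))"

definition rho :: "complex \<Rightarrow> complex \<Rightarrow> nat \<Rightarrow> complex" where
  "rho a0 a1 n = of_nat (n + 1) * (a0 + a1 * of_nat (n + 1))"

definition Lambda_Appell :: "complex \<Rightarrow> complex \<Rightarrow> (nat \<Rightarrow> complex poly) \<Rightarrow> bool" where
  "Lambda_Appell a0 a1 B \<longleftrightarrow> MPS B \<and>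
     (\<forall>n. Lam a0 a1 (B (Suc n)) = smult (rho a0 a1 n) (B n))"

definition lin_functional :: "(complex poly \<Rightarrow> complex) \<Rightarrow> bool" where
  "lin_functional u \<longleftrightarrow> (\<forall>p q. u (p + q) = u p + u q) \<and> (\<forall>c p. u (smult c p) = c * u p)"

definition orthogonal_wrt :: "(complex poly \<Rightarrow> complex) \<Rightarrow> (nat \<Rightarrow> complex poly) \<Rightarrow> bool" where
  "orthogonal_wrt u B \<longleftrightarrow> lin_functional u \<and>
     (\<forall>n m. n \<noteq> m \<longrightarrow> u (B n * B m) = 0) \<and> (\<forall>n. u (B n * B n) \<noteq> 0)"

definition orthogonal_MPS :: "(nat \<Rightarrow> complex poly) \<Rightarrow> bool" where
  "orthogonal_MPS B \<longleftrightarrow> MPS B \<and> (\<exists>u. orthogonal_wrt u B)"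

text \<open>Pearson equation D(xu) + (x - alpha - 1) u = 0, evaluated on polynomials p:
  <D(xu),p> = - <u, x p'>, <(x-alpha-1)u, p> = <u, (x-alpha-1) p>.\<close>
definition laguerre_pearson :: "complex \<Rightarrow> (complex poly \<Rightarrow> complex) \<Rightarrow> bool" where
  "laguerre_pearson \<alpha> u \<longleftrightarrow>
     (\<forall>p. - u ([:0, 1:] * pderiv p) + u ([:- \<alpha> - 1, 1:] * p) = 0)"

definition is_laguerre :: "complex \<Rightarrow> (nat \<Rightarrow> complex poly) \<Rightarrow> bool" where
  "is_laguerre \<alpha> L \<longleftrightarrow> MPS L \<and> (\<exists>u. orthogonal_wrt u L \<and> laguerre_pearson \<alpha> u)"

definition affine_transform :: "complex \<Rightarrow> complex \<Rightarrow> (nat \<Rightarrow> complex poly) \<Rightarrow> nat \<Rightarrow> complex poly" where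
  "affine_transform c d B n = smult (inverse (c ^ n)) (pcompose (B n) [:d, c:])"

end

theory Submission
  imports Defs
begin

definition lam :: "complex \<Rightarrow> complex \<Rightarrow> nat \<Rightarrow> complex" where
  "lam a0 a1 k = of_nat k * (a0 + a1 * of_nat k)"

lemma rho_lam: "rho a0 a1 n = lam a0 a1 (Suc n)"
  by (simp add: rho_def lam_def)

lemma coeff_xmult: "coeff ([:0,1:] * (p::complex poly)) k = (if k = 0 then 0 else coeff p (k - 1))"
  by (cases k) (simp_all add: coeff_pCons)

lemma coeff_Lam: "coeff (Lam a0 a1 p) k = lam a0 a1 (Suc k) * coeff p (Suc k)"
  by (simp add: Lam_def lam_def coeff_pderiv coeff_xmult algebra_simps)

lemma lin_add: "lin_functional u \<Longrightarrow> u (p + q) = u p + u q"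
  by (simp add: lin_functional_def)
lemma lin_smult: "lin_functional u \<Longrightarrow> u (smult c p) = c * u p"
  by (simp add: lin_functional_def)
lemma lin_zero: "lin_functional u \<Longrightarrow> u 0 = 0"
  using lin_smult[of u 0 0] by simp
lemma lin_minus: "lin_functional u \<Longrightarrow> u (- p) = - u p"
  using lin_smult[of u "-1" p] by simp
lemma lin_diff: "lin_functional u \<Longrightarrow> u (p - q) = u p - u q"
  using lin_add[of u p "-q"] lin_minus[of u q] by simp
lemma lin_sum: "lin_functional u \<Longrightarrow> u (sum f A) = (\<Sum>i\<in>A. u (f i))"
  by (induction A rule: infinite_finite_induct) (simp_all add: lin_zero lin_add)

lemma MPS_B0: "MPS B \<Longrightarrow> B 0 = 1"
  unfolding MPS_def by (metis degree_0_id one_poly_eq_simps(1))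

lemma MPS_reduce:
  assumes "MPS B" "degree p \<le> Suc d"
  shows "degree (p - smult (coeff p (Suc d)) (B (Suc d))) \<le> d"
proof (rule degree_le, intro allI impI)
  fix i assume "d < i"
  show "coeff (p - smult (coeff p (Suc d)) (B (Suc d))) i = 0"
  proof (cases "i = Suc d")
    case True
    have "coeff (B (Suc d)) (Suc d) = 1" using assms(1) unfolding MPS_def by metis
    then show ?thesis using True by simp
  next
    case False
    then have "i > Suc d" "i > degree (B (Suc d))" using \<open>d < i\<close> assms by (auto simp: MPS_def)
    then show ?thesis using assms by (simp add: coeff_eq_0)
  qed
qed

lemma lin_vanish:
  assumes "lin_functional \<phi>" "MPS B" "\<forall>k\<le>d. \<phi> (B k) = 0" "degree p \<le> d"
  shows "\<phi> p = 0"
  using assms(3,4)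
proof (induction d arbitrary: p)
  case 0
  then have "p = smult (coeff p 0) (B 0)"
    using MPS_B0[OF assms(2)] by (simp add: degree_0_id)
  then show ?case using 0 lin_smult[OF assms(1)] by (metis le_refl mult_zero_right)
next
  case (Suc d)
  define r where "r = p - smult (coeff p (Suc d)) (B (Suc d))"
  have "degree r \<le> d" unfolding r_def by (rule MPS_reduce[OF assms(2) Suc.prems(2)])
  then have "\<phi> r = 0" using Suc by auto
  moreover have "p = r + smult (coeff p (Suc d)) (B (Suc d))" by (simp add: r_def)
  ultimately have "\<phi> p = 0 + coeff p (Suc d) * \<phi> (B (Suc d))"
    using lin_add[OF assms(1)] lin_smult[OF assms(1)] by metis
  then show ?case using Suc.prems(1) by simp
qed

lemma ortho_lower:
  assumes "lin_functional u" "MPS B" "\<forall>n m. n \<noteq> m \<longrightarrow> u (B n * B m) = 0" "degree q < n"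
  shows "u (B n * q) = 0"
proof -
  have lin: "lin_functional (\<lambda>q. u (B n * q))"
    using assms(1) by (simp add: lin_functional_def distrib_left lin_add)
  show ?thesis
    by (rule lin_vanish[OF lin assms(2), of "n - 1"]) (use assms in auto)
qed

lemma ortho_lead:
  assumes "lin_functional u" "MPS B" "\<forall>n m. n \<noteq> m \<longrightarrow> u (B n * B m) = 0" "degree r = k"
  shows "u (B k * r) = coeff r k * u (B k * B k)"
proof -
  define r' where "r' = r - smult (coeff r k) (B k)"
  have "u (B k * r') = 0"
  proof (cases k)
    case 0
    then have "r' = 0" unfolding r'_def using assms MPS_B0[OF assms(2)] by (simp add: degree_0_id)
    then show ?thesis by (simp add: lin_zero[OF assms(1)])
  next
    case (Suc d)
    then have "degree r' \<le> d" unfolding r'_def using assms MPS_reduce[OF assms(2), of r d] by simp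
    then show ?thesis using Suc by (intro ortho_lower[OF assms(1-3)]) auto
  qed
  moreover have "B k * r = smult (coeff r k) (B k * B k) + B k * r'"
    by (simp add: r'_def algebra_simps)
  ultimately show ?thesis using lin_add[OF assms(1)] lin_smult[OF assms(1)] by simp
qed

lemma ortho_uniq:
  assumes "orthogonal_wrt u B" "MPS B" "degree p \<le> n" "\<forall>q. degree q < n \<longrightarrow> u (q * p) = 0"
  shows "p = smult (coeff p n) (B n)"
proof (rule ccontr)
  assume ne: "p \<noteq> smult (coeff p n) (B n)"
  have lin: "lin_functional u" and orth: "\<forall>n m. n \<noteq> m \<longrightarrow> u (B n * B m) = 0"
    and nrm: "\<forall>n. u (B n * B n) \<noteq> 0"
    using assms(1) unfolding orthogonal_wrt_def by auto
  define r where "r = p - smult (coeff p n) (B n)"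
  have r0: "r \<noteq> 0" using ne by (simp add: r_def)
  have Bn: "degree (B n) = n" "coeff (B n) n = 1" using assms(2) unfolding MPS_def by metis+
  have "degree r \<le> n" unfolding r_def using assms(3) Bn by (simp add: degree_diff_le)
  moreover have "coeff r n = 0" unfolding r_def using Bn by simp
  ultimately have dr: "degree r < n" using r0
    by (metis leading_coeff_0_iff le_neq_implies_less)
  define k where "k = degree r"
  have "u (B k * r) = coeff r k * u (B k * B k)"
    using ortho_lead[OF lin assms(2) orth] k_def by simp
  moreover have "coeff r k \<noteq> 0" using r0 k_def by simp
  ultimately have "u (B k * r) \<noteq> 0" using nrm by simp
  moreover have "u (B k * r) = 0"
  proof -
    have "degree (B k) < n" using assms(2) dr k_def unfolding MPS_def by simp
    then have "u (B k * p) = 0" "u (B n * B k) = 0"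
      using assms(4) ortho_lower[OF lin assms(2) orth] by auto
    then show ?thesis unfolding r_def
      by (simp add: right_diff_distrib lin_diff[OF lin] lin_smult[OF lin] mult.commute)
  qed
  ultimately show False by simp
qed

lemma ortho_rec:
  assumes "orthogonal_wrt u B" "MPS B"
  shows "\<exists>s t. [:0,1:] * B (Suc m) = B (Suc (Suc m)) + smult s (B (Suc m)) + smult t (B m)"
proof -
  have lin: "lin_functional u" and orth: "\<forall>n m. n \<noteq> m \<longrightarrow> u (B n * B m) = 0"
    using assms(1) unfolding orthogonal_wrt_def by auto
  have dB: "\<And>n. degree (B n) = n" "\<And>n. coeff (B n) n = 1" using assms(2) unfolding MPS_def by metis+
  define p where "p = [:0,1:] * B (Suc m) - B (Suc (Suc m))"
  have dp: "degree p \<le> Suc m"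
  proof (rule degree_le, intro allI impI)
    fix i assume i: "Suc m < i"
    show "coeff p i = 0"
    proof (cases "i = Suc (Suc m)")
      case True then show ?thesis using dB by (simp add: p_def coeff_xmult)
    next
      case False
      then have "i - 1 > degree (B (Suc m))" "i > degree (B (Suc (Suc m)))" using i dB by auto
      then show ?thesis using i by (cases i) (auto simp: p_def coeff_eq_0)
    qed
  qed
  define s where "s = coeff p (Suc m)"
  define p1 where "p1 = p - smult s (B (Suc m))"
  have dp1: "degree p1 \<le> m" unfolding p1_def s_def by (rule MPS_reduce[OF assms(2) dp])
  have "\<forall>q. degree q < m \<longrightarrow> u (q * p1) = 0"
  proof (intro allI impI)
    fix q :: "complex poly" assume q: "degree q < m"
    have "degree (q * [:0,1:]) < Suc m"
      using q degree_mult_le[of q "[:0,1:]"] by simp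
    then have 1: "u (B (Suc m) * (q * [:0,1:])) = 0" using ortho_lower[OF lin assms(2) orth] by blast
    have 2: "u (B (Suc (Suc m)) * q) = 0" using q ortho_lower[OF lin assms(2) orth] by simp
    have 3: "u (B (Suc m) * q) = 0" using q ortho_lower[OF lin assms(2) orth] by simp
    have "q * p1 = B (Suc m) * (q * [:0,1:]) - B (Suc (Suc m)) * q - smult s (B (Suc m) * q)"
      by (simp add: p1_def p_def algebra_simps)
    then show "u (q * p1) = 0" using 1 2 3 by (simp add: lin_diff[OF lin] lin_smult[OF lin])
  qed
  then have "p1 = smult (coeff p1 m) (B m)"
    by (intro ortho_uniq[OF assms(1,2) dp1])
  then have "[:0,1:] * B (Suc m) = B (Suc (Suc m)) + smult s (B (Suc m)) + smult (coeff p1 m) (B m)"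
    unfolding p1_def p_def by (simp add: algebra_simps)
  then show ?thesis by blast
qed

lemma OL:
  assumes "orthogonal_wrt u B" "MPS B" "degree q < n"
  shows "u (q * B n) = 0"
  using ortho_lower[of u B q n] assms unfolding orthogonal_wrt_def by (simp add: mult.commute)

lemma lin_of_ortho: "orthogonal_wrt u B \<Longrightarrow> lin_functional u"
  unfolding orthogonal_wrt_def by simp

lemma PE':
  assumes "lin_functional u" "laguerre_pearson \<alpha> u"
  shows "u ([:0,1:] * pderiv p) = u ([:0,1:] * p) - (\<alpha> + 1) * u p"
proof -
  have "[:- \<alpha> - 1, 1:] * p = [:0,1:] * p + smult (- \<alpha> - 1) p"
    by (simp add: algebra_simps)
  then have "u ([:- \<alpha> - 1, 1:] * p) = u ([:0,1:] * p) - (\<alpha> + 1) * u p"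
    using lin_add[OF assms(1)] lin_smult[OF assms(1)] by (simp add: algebra_simps)
  then show ?thesis using assms(2) unfolding laguerre_pearson_def by (metis add.commute eq_neg_iff_add_eq_0 neg_equal_iff_equal)
qed

lemma K1:
  assumes "lin_functional u" "laguerre_pearson \<alpha> u"
  shows "u ([:0,1:] * (w * pderiv r)) = u ([:0,1:] * (w * r)) - (\<alpha> + 1) * u (w * r) - u ([:0,1:] * (pderiv w * r))"
proof -
  have e: "[:0,1:] * pderiv (w * r) = [:0,1:] * (w * pderiv r) + [:0,1:] * (pderiv w * r)"
    by (simp only: pderiv_mult distrib_left mult.commute[of r "pderiv w"])
  have "u ([:0,1:] * pderiv (w * r)) = u ([:0,1:] * (w * pderiv r)) + u ([:0,1:] * (pderiv w * r))"
    unfolding e by (rule lin_add[OF assms(1)])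
  then show ?thesis using PE'[OF assms, of "w * r"] by (simp add: algebra_simps)
qed

lemma Lam_alt:
  assumes "a0 = a1 * \<alpha>"
  shows "Lam a0 a1 r = smult a1 (smult (\<alpha> + 1) (pderiv r) + [:0,1:] * pderiv (pderiv r))"
  unfolding Lam_def assms by (simp add: pderiv_mult pderiv_pCons algebra_simps smult_add_left smult_add_right)

lemma K3:
  assumes "lin_functional u" "laguerre_pearson \<alpha> u" "a0 = a1 * \<alpha>"
  shows "u (q * Lam a0 a1 r) = a1 * (u ([:0,1:] * (q * pderiv r)) - u ([:0,1:] * (pderiv q * pderiv r)))"
proof -
  have "q * Lam a0 a1 r = smult a1 (smult (\<alpha> + 1) (q * pderiv r) + [:0,1:] * (q * pderiv (pderiv r)))"
    unfolding Lam_alt[OF assms(3)] by (simp add: algebra_simps)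
  then have eq1: "u (q * Lam a0 a1 r) = a1 * ((\<alpha> + 1) * u (q * pderiv r) + u ([:0,1:] * (q * pderiv (pderiv r))))"
    by (simp only: lin_add[OF assms(1)] lin_smult[OF assms(1)])
  show ?thesis using eq1[unfolded K1[OF assms(1,2), of q "pderiv r"]] by (simp add: algebra_simps)
qed

lemma deg_x: "degree ([:0,1:] * (w::complex poly)) \<le> degree w + 1"
  using degree_mult_le[of "[:0,1:]" w] by simp

lemma laguerre_appell:
  assumes "orthogonal_wrt u L" "MPS L" "laguerre_pearson \<alpha> u" "a0 = a1 * \<alpha>"
  shows "Lam a0 a1 (L (Suc n)) = smult (rho a0 a1 n) (L n)"
proof -
  have lin: "lin_functional u" using assms(1) by (rule lin_of_ortho)
  have dL: "\<And>n. degree (L n) = n" "\<And>n. coeff (L n) n = 1" using assms(2) unfolding MPS_def by metis+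
  let ?r = "L (Suc n)"
  have dp: "degree (Lam a0 a1 ?r) \<le> n"
    by (rule degree_le) (auto simp: coeff_Lam coeff_eq_0 dL)
  have cp: "coeff (Lam a0 a1 ?r) n = rho a0 a1 n" by (simp add: coeff_Lam dL rho_lam)
  have low: "u ([:0,1:] * (w * pderiv ?r)) = 0" if "degree w < n" for w
  proof -
    have "u ([:0,1:] * (w * ?r)) = u (([:0,1:] * w) * ?r)" by (simp add: mult.assoc)
    also have "\<dots> = 0" using deg_x[of w] that by (intro OL[OF assms(1,2)]) simp
    finally have 1: "u ([:0,1:] * (w * ?r)) = 0" .
    have 2: "u (w * ?r) = 0" using that by (intro OL[OF assms(1,2)]) simp
    have "u ([:0,1:] * (pderiv w * ?r)) = u (([:0,1:] * pderiv w) * ?r)" by (simp add: mult.assoc)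
    also have "\<dots> = 0" using deg_x[of "pderiv w"] that degree_pderiv[of w]
      by (intro OL[OF assms(1,2)]) simp
    finally have 3: "u ([:0,1:] * (pderiv w * ?r)) = 0" .
    show ?thesis using K1[OF lin assms(3), of w ?r] 1 2 3 by simp
  qed
  have "\<forall>q. degree q < n \<longrightarrow> u (q * Lam a0 a1 ?r) = 0"
  proof (intro allI impI)
    fix q :: "complex poly" assume q: "degree q < n"
    have "degree (pderiv q) < n" using q degree_pderiv[of q] by simp
    then show "u (q * Lam a0 a1 ?r) = 0"
      using K3[OF lin assms(3,4), of q ?r] low q by simp
  qed
  then show ?thesis using ortho_uniq[OF assms(1,2) dp] cp by simp
qed

definition LC :: "complex \<Rightarrow> nat \<Rightarrow> nat \<Rightarrow> complex" where
  "LC \<alpha> n k = (-1) ^ (n - k) * of_nat (n choose k) * pochhammer (\<alpha> + of_nat k + 1) (n - k)"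

definition Lag :: "complex \<Rightarrow> nat \<Rightarrow> complex poly" where
  "Lag \<alpha> n = (\<Sum>k\<le>n. monom (LC \<alpha> n k) k)"

definition U :: "complex \<Rightarrow> complex poly \<Rightarrow> complex" where
  "U \<alpha> p = (\<Sum>k\<le>degree p. coeff p k * pochhammer (\<alpha> + 1) k)"

lemma coeff_Lag: "coeff (Lag \<alpha> n) k = (if k \<le> n then LC \<alpha> n k else 0)"
  unfolding Lag_def coeff_sum coeff_monom by (simp add: sum.delta)

lemma LC_nn: "LC \<alpha> n n = 1"
  by (simp add: LC_def)

lemma MPS_Lag: "MPS (Lag \<alpha>)"
  unfolding MPS_def
proof
  fix n
  have "degree (Lag \<alpha> n) \<le> n" by (rule degree_le) (simp add: coeff_Lag)
  moreover have "coeff (Lag \<alpha> n) n \<noteq> 0" by (simp add: coeff_Lag LC_nn)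
  ultimately have "degree (Lag \<alpha> n) = n" by (simp add: le_antisym le_degree)
  then show "degree (Lag \<alpha> n) = n \<and> lead_coeff (Lag \<alpha> n) = 1" by (simp add: coeff_Lag LC_nn)
qed

lemma U_eq:
  assumes "degree p \<le> N"
  shows "U \<alpha> p = (\<Sum>k\<le>N. coeff p k * pochhammer (\<alpha> + 1) k)"
  unfolding U_def using assms
  by (intro sum.mono_neutral_left) (auto simp: coeff_eq_0)

lemma lin_U: "lin_functional (U \<alpha>)"
  unfolding lin_functional_def
proof (intro conjI allI)
  fix p q :: "complex poly"
  let ?N = "max (degree p) (degree q)"
  have "degree (p + q) \<le> ?N" by (rule degree_add_le_max)
  then show "U \<alpha> (p + q) = U \<alpha> p + U \<alpha> q"
    by (simp add: U_eq[of _ ?N] sum.distrib algebra_simps)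
next
  fix c p
  show "U \<alpha> (smult c p) = c * U \<alpha> p"
    by (simp add: U_eq[of "smult c p" "degree p"] U_def sum_distrib_left algebra_simps)
qed

lemma U_monom: "U \<alpha> (monom c k) = c * pochhammer (\<alpha> + 1) k"
proof -
  have "U \<alpha> (monom c k) = (\<Sum>j\<le>k. coeff (monom c k) j * pochhammer (\<alpha> + 1) j)"
    by (rule U_eq) (simp add: degree_monom_le)
  also have "\<dots> = (\<Sum>j\<le>k. if j = k then c * pochhammer (\<alpha> + 1) j else 0)"
    by (rule sum.cong) (auto simp: coeff_monom)
  finally show ?thesis by simp
qed

lemma lin_monoms:
  assumes "lin_functional \<phi>"
  shows "\<phi> p = (\<Sum>k\<le>degree p. coeff p k * \<phi> (monom 1 k))"
proof -
  have "\<phi> p = \<phi> (\<Sum>k\<le>degree p. smult (coeff p k) (monom 1 k))"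
    by (simp add: smult_monom poly_as_sum_of_monoms)
  also have "\<dots> = (\<Sum>k\<le>degree p. coeff p k * \<phi> (monom 1 k))"
    by (simp add: lin_sum[OF assms] lin_smult[OF assms])
  finally show ?thesis .
qed

lemma pearson_U: "laguerre_pearson \<alpha> (U \<alpha>)"
proof -
  define \<phi> where "\<phi> p = - U \<alpha> ([:0, 1:] * pderiv p) + U \<alpha> ([:- \<alpha> - 1, 1:] * p)" for p
  have lin: "lin_functional \<phi>"
    unfolding lin_functional_def \<phi>_def
    by (simp only: pderiv_add pderiv_smult distrib_left mult_smult_right lin_add[OF lin_U] lin_smult[OF lin_U])
       (simp add: algebra_simps)
  have m: "\<phi> (monom 1 k) = 0" for k
  proof -
    have 1: "[:0, 1:] * pderiv (monom 1 k) = monom (of_nat k) k"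
    proof (cases k)
      case 0 then show ?thesis by (simp add: pderiv_monom)
    next
      case (Suc j)
      have "pderiv (monom 1 k) = monom (of_nat k) j" using Suc by (simp add: pderiv_monom)
      then show ?thesis using Suc by (simp add: monom_Suc)
    qed
    have 2: "[:- \<alpha> - 1, 1:] * monom 1 k = monom (- \<alpha> - 1) k + monom 1 (Suc k)"
      by (simp add: monom_Suc algebra_simps smult_monom)
    show ?thesis unfolding \<phi>_def 1 2
      by (simp add: lin_add[OF lin_U] U_monom pochhammer_rec' algebra_simps)
  qed
  have "\<phi> p = 0" for p by (subst lin_monoms[OF lin]) (simp add: m)
  then show ?thesis unfolding laguerre_pearson_def \<phi>_def by simp
qed

lemma OL2:
  assumes "lin_functional u" "MPS B" "\<forall>n m. n \<noteq> m \<longrightarrow> u (B n * B m) = 0" "degree q < n"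
  shows "u (q * B n) = 0"
  using ortho_lower[of u B q n] assms by (simp add: mult.commute)

lemma low:
  assumes lin: "lin_functional u" and "MPS L" "\<forall>n m. n \<noteq> m \<longrightarrow> u (L n * L m) = 0"
    and P: "laguerre_pearson \<alpha> u" and "degree w < n"
  shows "u ([:0,1:] * (w * pderiv (L (Suc n)))) = 0"
proof -
  let ?r = "L (Suc n)"
  have "u ([:0,1:] * (w * ?r)) = u (([:0,1:] * w) * ?r)" by (simp add: mult.assoc)
  also have "\<dots> = 0" using deg_x[of w] assms(5) by (intro OL2[OF lin assms(2,3)]) simp
  finally have 1: "u ([:0,1:] * (w * ?r)) = 0" .
  have 2: "u (w * ?r) = 0" using assms(5) by (intro OL2[OF lin assms(2,3)]) simp
  have "u ([:0,1:] * (pderiv w * ?r)) = u (([:0,1:] * pderiv w) * ?r)" by (simp add: mult.assoc)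
  also have "\<dots> = 0" using deg_x[of "pderiv w"] assms(5) degree_pderiv[of w]
    by (intro OL2[OF lin assms(2,3)]) simp
  finally have 3: "u ([:0,1:] * (pderiv w * ?r)) = 0" .
  show ?thesis using K1[OF lin P, of w ?r] 1 2 3 by simp
qed

lemma LC_appell:
  assumes "k \<le> n"
  shows "of_nat (Suc k) * (\<alpha> + of_nat k + 1) * LC \<alpha> (Suc n) (Suc k)
       = of_nat (Suc n) * (\<alpha> + of_nat n + 1) * LC \<alpha> n k"
proof -
  define m where "m = n - k"
  have nm: "n = k + m" using assms m_def by simp
  have b: "of_nat (Suc k) * of_nat (Suc n choose Suc k) = (of_nat (Suc n) * of_nat (n choose k) :: complex)"
    using Suc_times_binomial[of k n] by (metis of_nat_mult)
  have p: "(\<alpha> + of_nat k + 1) * pochhammer (\<alpha> + of_nat (Suc k) + 1) m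
        = (\<alpha> + of_nat n + 1) * pochhammer (\<alpha> + of_nat k + 1) m"
  proof -
    have "(\<alpha> + of_nat k + 1) * pochhammer (\<alpha> + of_nat (Suc k) + 1) m = pochhammer (\<alpha> + of_nat k + 1) (Suc m)"
      by (simp add: pochhammer_rec add_ac)
    also have "\<dots> = (\<alpha> + of_nat k + 1 + of_nat m) * pochhammer (\<alpha> + of_nat k + 1) m"
      by (rule pochhammer_rec')
    finally show ?thesis by (simp add: nm add_ac)
  qed
  have "of_nat (Suc k) * (\<alpha> + of_nat k + 1) * LC \<alpha> (Suc n) (Suc k)
      = (-1) ^ m * (of_nat (Suc k) * of_nat (Suc n choose Suc k)) * ((\<alpha> + of_nat k + 1) * pochhammer (\<alpha> + of_nat (Suc k) + 1) m)"
    by (simp add: LC_def m_def mult_ac)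
  also have "\<dots> = (-1) ^ m * (of_nat (Suc n) * of_nat (n choose k)) * ((\<alpha> + of_nat n + 1) * pochhammer (\<alpha> + of_nat k + 1) m)"
    by (simp only: b p)
  also have "\<dots> = of_nat (Suc n) * (\<alpha> + of_nat n + 1) * LC \<alpha> n k"
    by (simp add: LC_def m_def mult_ac)
  finally show ?thesis .
qed

lemma LC_eigen:
  assumes "k < n"
  shows "of_nat (Suc k) * (\<alpha> + of_nat k + 1) * LC \<alpha> n (Suc k) = (of_nat k - of_nat n) * LC \<alpha> n k"
proof -
  define m where "m = n - Suc k"
  have nk: "n - k = Suc m" using assms m_def by simp
  have b0: "Suc k * (n choose Suc k) = (n - k) * (n choose k)"
    using binomial_absorption[of k n] binomial_absorb_comp[of n k] by simp
  have b: "of_nat (Suc k) * of_nat (n choose Suc k) = ((of_nat n - of_nat k) * of_nat (n choose k) :: complex)"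
    using arg_cong[OF b0, of "of_nat :: nat \<Rightarrow> complex"] assms by (simp add: of_nat_diff algebra_simps)
  have p: "pochhammer (\<alpha> + of_nat k + 1) (Suc m) = (\<alpha> + of_nat k + 1) * pochhammer (\<alpha> + of_nat (Suc k) + 1) m"
    by (simp add: pochhammer_rec add_ac)
  have "of_nat (Suc k) * (\<alpha> + of_nat k + 1) * LC \<alpha> n (Suc k)
      = (-1) ^ m * (of_nat (Suc k) * of_nat (n choose Suc k)) * ((\<alpha> + of_nat k + 1) * pochhammer (\<alpha> + of_nat (Suc k) + 1) m)"
    by (simp add: LC_def m_def mult_ac)
  also have "\<dots> = (-1) ^ m * ((of_nat n - of_nat k) * of_nat (n choose k)) * pochhammer (\<alpha> + of_nat k + 1) (Suc m)"
    by (simp only: b p)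
  also have "\<dots> = (of_nat k - of_nat n) * LC \<alpha> n k"
    by (simp add: LC_def nk algebra_simps)
  finally show ?thesis .
qed

lemma Lag_appell:
  assumes "a0 = a1 * \<alpha>"
  shows "Lam a0 a1 (Lag \<alpha> (Suc n)) = smult (rho a0 a1 n) (Lag \<alpha> n)"
proof (rule poly_eqI)
  fix k
  show "coeff (Lam a0 a1 (Lag \<alpha> (Suc n))) k = coeff (smult (rho a0 a1 n) (Lag \<alpha> n)) k"
  proof (cases "k \<le> n")
    case True
    have "lam a0 a1 (Suc k) * LC \<alpha> (Suc n) (Suc k) = a1 * (of_nat (Suc k) * (\<alpha> + of_nat k + 1) * LC \<alpha> (Suc n) (Suc k))"
      by (simp add: lam_def assms algebra_simps)
    also have "\<dots> = a1 * (of_nat (Suc n) * (\<alpha> + of_nat n + 1) * LC \<alpha> n k)"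
      using LC_appell[OF True] by simp
    also have "\<dots> = rho a0 a1 n * LC \<alpha> n k"
      by (simp add: rho_def assms algebra_simps)
    finally show ?thesis using True by (simp add: coeff_Lam coeff_Lag)
  next
    case False then show ?thesis by (simp add: coeff_Lam coeff_Lag)
  qed
qed

definition T :: "complex \<Rightarrow> complex poly \<Rightarrow> complex poly" where
  "T \<alpha> q = [:0,1:] * pderiv (pderiv q) + [:\<alpha> + 1, -1:] * pderiv q"

lemma coeff_T: "coeff (T \<alpha> q) k = of_nat (Suc k) * (\<alpha> + of_nat k + 1) * coeff q (Suc k) - of_nat k * coeff q k"
  by (cases k) (simp_all add: T_def coeff_pderiv algebra_simps)

lemma Lag_eigen: "T \<alpha> (Lag \<alpha> n) = smult (- of_nat n) (Lag \<alpha> n)"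
proof (rule poly_eqI)
  fix k
  consider "k < n" | "k = n" | "k > n" by linarith
  then show "coeff (T \<alpha> (Lag \<alpha> n)) k = coeff (smult (- of_nat n) (Lag \<alpha> n)) k"
  proof cases
    case 1
    then show ?thesis using LC_eigen[OF 1, of \<alpha>] by (simp add: coeff_T coeff_Lag algebra_simps)
  qed (simp_all add: coeff_T coeff_Lag LC_nn)
qed

lemma T_sym:
  assumes lin: "lin_functional u" and P: "laguerre_pearson \<alpha> u"
  shows "u (p * T \<alpha> q) = u (q * T \<alpha> p)"
proof -
  define W where "W = p * pderiv q - q * pderiv p"
  have dW: "pderiv W = p * pderiv (pderiv q) - q * pderiv (pderiv p)"
    unfolding W_def by (simp add: pderiv_mult pderiv_diff algebra_simps)
  have m: "[:\<alpha> + 1, -1:] = [:\<alpha> + 1:] - [:0,1:]"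
    by simp
  have e0: "p * (x*q2 + (a - x)*q1) = q*(x*p2 + (a-x)*p1) + (x*(p*q2 - q*p2) + a*(p*q1 - q*p1) - x*(p*q1 - q*p1))"
    for x a p q p1 q1 p2 q2 :: "complex poly"
    by (simp add: algebra_simps)
  have e: "p * T \<alpha> q = q * T \<alpha> p + ([:0,1:] * pderiv W + [:\<alpha> + 1:] * W - [:0,1:] * W)"
    unfolding T_def m dW unfolding W_def by (rule e0)
  have "u ([:0,1:] * pderiv W + smult (\<alpha> + 1) W - [:0,1:] * W) = 0"
    using PE'[OF lin P, of W] by (simp add: lin_add[OF lin] lin_diff[OF lin] lin_smult[OF lin])
  then show ?thesis unfolding e by (simp add: lin_add[OF lin])
qed

lemma Lag_ortho_lower:
  assumes "degree q < n"
  shows "U \<alpha> (Lag \<alpha> n * q) = 0"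
proof -
  have lin: "lin_functional (U \<alpha>)" by (rule lin_U)
  have P: "laguerre_pearson \<alpha> (U \<alpha>)" by (rule pearson_U)
  have "\<forall>q. degree q \<le> d \<longrightarrow> d < n \<longrightarrow> U \<alpha> (Lag \<alpha> n * q) = 0" for d
  proof (induction d)
    case 0
    show ?case
    proof (intro allI impI)
      fix q :: "complex poly" assume q: "degree q \<le> 0" and n: "0 < n"
      have "\<forall>k>0. coeff q k = 0" using q by (auto intro: coeff_eq_0)
      then have "T \<alpha> q = 0" by (intro poly_eqI) (simp add: coeff_T; metis neq0_conv)
      then have "U \<alpha> (q * T \<alpha> (Lag \<alpha> n)) = 0" using T_sym[OF lin P, of "Lag \<alpha> n" q] by (simp add: lin_zero[OF lin])
      then have "- of_nat n * U \<alpha> (Lag \<alpha> n * q) = 0"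
        by (simp add: Lag_eigen lin_smult[OF lin] lin_minus[OF lin] mult.commute)
      then show "U \<alpha> (Lag \<alpha> n * q) = 0" using n by simp
    qed
  next
    case (Suc d)
    show ?case
    proof (intro allI impI)
      fix q :: "complex poly" assume q: "degree q \<le> Suc d" and n: "Suc d < n"
      define r where "r = T \<alpha> q + smult (of_nat (Suc d)) q"
      have "degree r \<le> d"
      proof (rule degree_le, intro allI impI)
        fix i assume "d < i"
        then show "coeff r i = 0" unfolding r_def using q
          by (cases "i = Suc d") (auto simp: coeff_T coeff_eq_0)
      qed
      then have r0: "U \<alpha> (Lag \<alpha> n * r) = 0" using Suc.IH n by simp
      have A: "U \<alpha> (q * T \<alpha> (Lag \<alpha> n)) = - of_nat n * U \<alpha> (Lag \<alpha> n * q)"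
        by (simp add: Lag_eigen lin_smult[OF lin] lin_minus[OF lin] mult.commute)
      have B: "U \<alpha> (q * T \<alpha> (Lag \<alpha> n)) = U \<alpha> (Lag \<alpha> n * T \<alpha> q)" using T_sym[OF lin P] by simp
      have C: "U \<alpha> (Lag \<alpha> n * T \<alpha> q) = U \<alpha> (Lag \<alpha> n * r) - of_nat (Suc d) * U \<alpha> (Lag \<alpha> n * q)"
        unfolding r_def by (simp add: distrib_left lin_add[OF lin] lin_smult[OF lin])
      have "- of_nat n * U \<alpha> (Lag \<alpha> n * q) = U \<alpha> (Lag \<alpha> n * r) - of_nat (Suc d) * U \<alpha> (Lag \<alpha> n * q)"
        by (metis A B C)
      then have "(of_nat n - of_nat (Suc d)) * U \<alpha> (Lag \<alpha> n * q) = (0::complex)"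
        using r0 by (simp add: algebra_simps)
      moreover have "(of_nat n - of_nat (Suc d) :: complex) \<noteq> 0"
      proof
        assume "(of_nat n - of_nat (Suc d) :: complex) = 0"
        then have "(of_nat n :: complex) = of_nat (Suc d)" by simp
        then have "n = Suc d" using of_nat_eq_iff by blast
        then show False using n by simp
      qed
      ultimately show "U \<alpha> (Lag \<alpha> n * q) = 0" by simp
    qed
  qed
  then show ?thesis using assms by blast
qed

lemma Lag_pair: "n \<noteq> m \<Longrightarrow> U \<alpha> (Lag \<alpha> n * Lag \<alpha> m) = 0"
  using Lag_ortho_lower[of "Lag \<alpha> m" n \<alpha>] Lag_ortho_lower[of "Lag \<alpha> n" m \<alpha>] MPS_Lag[of \<alpha>]
  unfolding MPS_def by (cases "m < n") (auto simp: mult.commute)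

lemma Lag_norm_rec:
  assumes "a0 = a1 * \<alpha>"
  shows "a1 * U \<alpha> (Lag \<alpha> (Suc m) * Lag \<alpha> (Suc m)) = rho a0 a1 m * U \<alpha> (Lag \<alpha> m * Lag \<alpha> m)"
proof -
  let ?L = "Lag \<alpha>" and ?x = "[:0,1:] :: complex poly"
  let ?r = "?L (Suc m)"
  have lin: "lin_functional (U \<alpha>)" by (rule lin_U)
  have P: "laguerre_pearson \<alpha> (U \<alpha>)" by (rule pearson_U)
  have M: "MPS ?L" by (rule MPS_Lag)
  have pr: "\<forall>n m. n \<noteq> m \<longrightarrow> U \<alpha> (?L n * ?L m) = 0" using Lag_pair by blast
  have dL: "\<And>n. degree (?L n) = n" "\<And>n. coeff (?L n) n = 1" using M unfolding MPS_def by metis+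
  have 1: "U \<alpha> (?L m * Lam a0 a1 ?r) = rho a0 a1 m * U \<alpha> (?L m * ?L m)"
    by (simp add: Lag_appell[OF assms] lin_smult[OF lin])
  have 2: "U \<alpha> (?L m * Lam a0 a1 ?r) = a1 * (U \<alpha> (?x * (?L m * pderiv ?r)) - U \<alpha> (?x * (pderiv (?L m) * pderiv ?r)))"
    by (rule K3[OF lin P assms])
  have 3: "U \<alpha> (?x * (pderiv (?L m) * pderiv ?r)) = 0"
  proof (cases m)
    case 0
    then have "pderiv (?L m) = 0" using MPS_B0[OF M] by simp
    then show ?thesis by (simp add: lin_zero[OF lin])
  next
    case (Suc j)
    then have "degree (pderiv (?L m)) < m" by (simp add: degree_pderiv dL)
    then show ?thesis by (rule low[OF lin M pr P])
  qed
  have 4: "U \<alpha> (?x * (pderiv (?L m) * ?r)) = 0"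
  proof (cases "m = 0")
    case True
    then have "pderiv (?L m) = 0" using MPS_B0[OF M] by simp
    then show ?thesis by (simp add: lin_zero[OF lin])
  next
    case False
    have "degree (?x * pderiv (?L m)) < Suc m"
      using deg_x[of "pderiv (?L m)"] degree_pderiv[of "?L m"] dL False by simp
    then have "U \<alpha> ((?x * pderiv (?L m)) * ?r) = 0" by (rule OL2[OF lin M pr])
    then show ?thesis by (simp add: mult.assoc)
  qed
  have 5: "U \<alpha> (?x * (?L m * ?r)) = U \<alpha> (?r * ?r)"
  proof -
    define d where "d = ?x * ?L m - ?r"
    have "degree d \<le> m"
    proof (rule degree_le, intro allI impI)
      fix i assume i: "m < i"
      show "coeff d i = 0"
      proof (cases "i = Suc m")
        case True then show ?thesis by (simp add: d_def dL)
      next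
        case False
        then have "i - 1 > degree (?L m)" "i > degree ?r" using i dL by auto
        then show ?thesis using i by (cases i) (auto simp: d_def coeff_eq_0)
      qed
    qed
    then have "U \<alpha> (d * ?r) = 0" by (intro OL2[OF lin M pr]) simp
    moreover have "?x * (?L m * ?r) = d * ?r + ?r * ?r" by (simp add: d_def algebra_simps)
    ultimately show ?thesis by (simp add: lin_add[OF lin])
  qed
  have 6: "U \<alpha> (?L m * ?r) = 0" using pr by simp
  have "U \<alpha> (?x * (?L m * pderiv ?r)) = U \<alpha> (?r * ?r)"
    using K1[OF lin P, of "?L m" ?r] 4 5 6 by simp
  then show ?thesis using 1 2 3 by simp
qed

lemma Lag_norm:
  assumes "a1 \<noteq> 0" "a0 = a1 * \<alpha>" "\<forall>n::nat. n \<ge> 1 \<longrightarrow> a0 + a1 * of_nat n \<noteq> 0"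
  shows "U \<alpha> (Lag \<alpha> n * Lag \<alpha> n) \<noteq> 0"
proof (induction n)
  case 0
  have "Lag \<alpha> 0 = 1" using MPS_B0[OF MPS_Lag] by simp
  then show ?case by (simp add: U_def)
next
  case (Suc m)
  have "(of_nat (Suc m)::complex) \<noteq> 0" by (rule of_nat_neq_0)
  then have "rho a0 a1 m \<noteq> 0" using assms(3)[rule_format, of "Suc m"] by (simp add: rho_def)
  then have "a1 * U \<alpha> (Lag \<alpha> (Suc m) * Lag \<alpha> (Suc m)) \<noteq> 0"
    using Lag_norm_rec[OF assms(2), of m] Suc.IH by simp
  then show ?case by auto
qed

lemma part1:
  assumes "a1 \<noteq> 0" "\<forall>n::nat. n \<ge> 1 \<longrightarrow> a0 + a1 * of_nat n \<noteq> 0"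
  shows "is_laguerre (a0 / a1) (Lag (a0 / a1))"
proof -
  have e: "a0 = a1 * (a0 / a1)" using assms(1) by simp
  show ?thesis unfolding is_laguerre_def orthogonal_wrt_def
    using MPS_Lag lin_U pearson_U Lag_pair Lag_norm[OF assms(1) e assms(2)] by blast
qed

lemma part2:
  assumes "a1 \<noteq> 0" "is_laguerre (a0 / a1) L"
  shows "Lambda_Appell a0 a1 L \<and> orthogonal_MPS L"
proof -
  have e: "a0 = a1 * (a0 / a1)" using assms(1) by simp
  obtain u where "MPS L" "orthogonal_wrt u L" "laguerre_pearson (a0 / a1) u"
    using assms(2) unfolding is_laguerre_def by blast
  then show ?thesis unfolding Lambda_Appell_def orthogonal_MPS_def
    using laguerre_appell[OF _ _ _ e] by blast
qed

lemma alg_id0: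
  fixes a0 a1 P l1 l2 l3 l4 l5 :: complex
  assumes l: "l1 = a0 + a1" "l2 = 2*(a0+2*a1)" "l3 = 3*(a0+3*a1)" "l4 = 4*(a0+4*a1)" "l5 = 5*(a0+5*a1)"
    and nz: "l1 \<noteq> 0" "l2 \<noteq> 0"
  shows "l1 * l1 * l2 * ((-(l3*P/l1 - l4*l3*P/(l1*l2))*P) - l5 * (-(l3*P/l1 - l4*l3*P/(l1*l2))*P) / l1
          - (l4*l3*P/(l1*l2) - l5*l4*P/(l1*l2)) * (l3*P/l1)) = -32*a1^2*l3*P^2"
proof -
  have "l1 * l1 * l2 * ((-(l3*P/l1 - l4*l3*P/(l1*l2))*P) - l5 * (-(l3*P/l1 - l4*l3*P/(l1*l2))*P) / l1
          - (l4*l3*P/(l1*l2) - l5*l4*P/(l1*l2)) * (l3*P/l1)) = l3*P^2*((l1-l5)*(l4-l2) - l4*(l3-l5))"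
    using nz by (simp add: field_simps) (simp add: algebra_simps power2_eq_square)
  also have "(l1-l5)*(l4-l2) - l4*(l3-l5) = -32*a1^2"
    unfolding l by (simp add: algebra_simps power2_eq_square)
  finally show ?thesis by simp
qed

lemma alg_id1:
  fixes a0 a1 b1 b2 l1 l2 l3 l4 l5 :: complex
  assumes l: "l1 = a0 + a1" "l2 = 2*(a0+2*a1)" "l3 = 3*(a0+3*a1)" "l4 = 4*(a0+4*a1)"
    and nz: "l1 \<noteq> 0" "l2 \<noteq> 0"
    and d: "b21 = l2*b1/l1" "b32 = l3*b1/l1" "b43 = l4*b1/l1" "b31 = l3*b2/l1" "b42 = l4*l3*b2/(l1*l2)"
      "s2 = b21 - b32" "t2 = b2 - b31 - s2*b21" "s3 = b32 - b43" "t3 = b31 - b42 - s3*b32"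
      "b30 = -(s2*b2 + t2*b1)"
  shows "l1^2 * ((l1-l4)*b30 - l1*(s3*b31 + t3*b21)) = -12*a1^2*b1*(2*l1*b2 - l2*b1^2)"
proof -
  have "l1^2 * ((l1-l4)*b30 - l1*(s3*b31 + t3*b21)) =
     - b1 * (l1*((l1-l4)*(l1+l2-2*l3) + l3*(l2+l3-2*l4)) * b2 - l2*((l1-l4)*(l2-l3) + l3*(l3-l4)) * b1^2)"
    unfolding d using nz by (simp add: field_simps) (simp add: algebra_simps power2_eq_square)
  also have "l1*((l1-l4)*(l1+l2-2*l3) + l3*(l2+l3-2*l4)) = 24*a1^2*l1"
    unfolding l by (simp add: algebra_simps power2_eq_square)
  also have "l2*((l1-l4)*(l2-l3) + l3*(l3-l4)) = 12*a1^2*l2"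
    unfolding l by (simp add: algebra_simps power2_eq_square)
  finally show ?thesis by (simp add: algebra_simps power2_eq_square)
qed

lemma alg_crux:
  fixes a0 a1 l1 l2 l3 l4 l5 :: complex
  assumes l: "l1 = a0 + a1" "l2 = 2*(a0+2*a1)" "l3 = 3*(a0+3*a1)" "l4 = 4*(a0+4*a1)" "l5 = 5*(a0+5*a1)"
    and nz: "a1 \<noteq> 0" "l1 \<noteq> 0" "l2 \<noteq> 0" "l3 \<noteq> 0"
    and ap21: "l1 * b21 = l2 * b10" and ap32: "l2 * b32 = l3 * b21" and ap31: "l1 * b31 = l3 * b20"
    and ap43: "l3 * b43 = l4 * b32" and ap42: "l2 * b42 = l4 * b31" and ap41: "l1 * b41 = l4 * b30"
    and ap53: "l3 * b53 = l5 * b42" and ap51: "l1 * b51 = l5 * b40"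
    and r11: "b10 = b21 + s1" and r10: "0 = b20 + s1*b10 + t1"
    and r22: "b21 = b32 + s2" and r21: "b20 = b31 + s2*b21 + t2" and r20: "0 = b30 + s2*b20 + t2*b10"
    and r33: "b32 = b43 + s3" and r32: "b31 = b42 + s3*b32 + t3" and r31: "b30 = b41 + s3*b31 + t3*b21"
    and r30: "0 = b40 + s3*b30 + t3*b20"
    and r43: "b42 = b53 + s4*b43 + t4" and r41: "b40 = b51 + s4*b41 + t4*b31"
    and t1: "t1 \<noteq> 0"
  shows "b10 \<noteq> 0 \<and> 2 * l1 * b20 = l2 * b10^2"
proof (cases "b10 = 0")
  case True
  have "b21 = 0" using ap21 True nz by simp
  then have "s1 = 0" using r11 True by simp
  then have "t1 = - b20" using r10 by (simp add: eq_neg_iff_add_eq_0 add.commute)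
  then have P: "b20 \<noteq> 0" using t1 by simp
  have "b32 = 0" using ap32 \<open>b21 = 0\<close> nz by simp
  then have "b43 = 0" using ap43 nz by simp
  have "s2 = 0" using r22 \<open>b21 = 0\<close> \<open>b32 = 0\<close> by simp
  have "s3 = 0" using r33 \<open>b43 = 0\<close> \<open>b32 = 0\<close> by simp
  have "b30 = 0" using r20 \<open>s2 = 0\<close> True by simp
  then have "b41 = 0" using ap41 nz by simp
  have t3: "t3 = b31 - b42" using r32 \<open>s3 = 0\<close> by simp
  have b40: "b40 = -(b31 - b42) * b20" using r30 \<open>s3 = 0\<close> t3 by (simp add: algebra_simps)
  have t4: "t4 = b42 - b53" using r43 \<open>b43 = 0\<close> by simp
  have e: "b40 - b51 - t4 * b31 = 0" using r41 \<open>b41 = 0\<close> by simp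
  have b31: "b31 = l3*b20/l1" using ap31 nz by (simp add: field_simps)
  have b42: "b42 = l4*l3*b20/(l1*l2)" using ap42 b31 nz by (simp add: field_simps)
  have b53: "b53 = l5*l4*b20/(l1*l2)" using ap53 b42 nz by (simp add: field_simps)
  have b51: "b51 = l5 * b40 / l1" using ap51 nz by (simp add: field_simps)
  have "l1 * l1 * l2 * (b40 - b51 - t4 * b31) = -32*a1^2*l3*b20^2"
    unfolding b51 t4 unfolding b40 b31 b42 b53 by (rule alg_id0[OF l nz(2,3)])
  then have "-32*a1^2*l3*b20^2 = 0" using e by simp
  then show ?thesis using nz P by simp
next
  case False
  have b21: "b21 = l2*b10/l1" using ap21 nz by (simp add: field_simps)
  have b32: "b32 = l3*b10/l1" using ap32 b21 nz by (simp add: field_simps)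
  have b43: "b43 = l4*b10/l1" using ap43 b32 nz by (simp add: field_simps)
  have b31: "b31 = l3*b20/l1" using ap31 nz by (simp add: field_simps)
  have b42: "b42 = l4*l3*b20/(l1*l2)" using ap42 b31 nz by (simp add: field_simps)
  have s2: "s2 = b21 - b32" using r22 by simp
  have t2: "t2 = b20 - b31 - s2*b21" using r21 by simp
  have s3: "s3 = b32 - b43" using r33 by simp
  have t3: "t3 = b31 - b42 - s3*b32" using r32 by simp
  have b30: "b30 = -(s2*b20 + t2*b10)" using r20 by (metis add.commute add.left_commute add_eq_0_iff2 minus_add_distrib)
  have e: "(l1-l4)*b30 - l1*(s3*b31 + t3*b21) = 0"
  proof -
    have "l1 * b30 = l1 * b41 + l1 * (s3*b31 + t3*b21)" using r31 by (simp add: algebra_simps)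
    then show ?thesis using ap41 by (simp add: algebra_simps)
  qed
  have "l1^2 * ((l1-l4)*b30 - l1*(s3*b31 + t3*b21)) = -12*a1^2*b10*(2*l1*b20 - l2*b10^2)"
    by (rule alg_id1[OF l(1-4) nz(2,3) b21 b32 b43 b31 b42 s2 t2 s3 t3 b30])
  then have "-12*a1^2*b10*(2*l1*b20 - l2*b10^2) = 0" using e by simp
  then show ?thesis using nz False by simp
qed

lemma appell_coeff:
  assumes "Lambda_Appell a0 a1 B"
  shows "lam a0 a1 (Suc k) * coeff (B (Suc n)) (Suc k) = lam a0 a1 (Suc n) * coeff (B n) k"
proof -
  have "Lam a0 a1 (B (Suc n)) = smult (rho a0 a1 n) (B n)" using assms unfolding Lambda_Appell_def by blast
  then have "coeff (Lam a0 a1 (B (Suc n))) k = coeff (smult (rho a0 a1 n) (B n)) k" by simp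
  then show ?thesis by (simp add: coeff_Lam rho_lam)
qed

lemma recc:
  fixes P Q R S :: "complex poly"
  assumes "[:0,1:] * P = Q + smult s R + smult t S"
  shows "(if k = 0 then 0 else coeff P (k - 1)) = coeff Q k + s * coeff R k + t * coeff S k"
proof -
  have "coeff ([:0,1:] * P) k = coeff (Q + smult s R + smult t S) k" using assms by simp
  then show ?thesis by (simp only: coeff_xmult coeff_add coeff_smult)
qed

lemma crux:
  assumes a1: "a1 \<noteq> 0" and nz: "\<forall>n::nat. n \<ge> 1 \<longrightarrow> a0 + a1 * of_nat n \<noteq> 0"
    and A: "Lambda_Appell a0 a1 B" and O: "orthogonal_wrt v B"
  shows "coeff (B 1) 0 \<noteq> 0 \<and> 2 * lam a0 a1 1 * coeff (B 2) 0 = lam a0 a1 2 * (coeff (B 1) 0)^2"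
proof -
  have M: "MPS B" using A unfolding Lambda_Appell_def by simp
  have d1: "coeff (B n) n = 1" for n using M unfolding MPS_def by metis
  have d0: "coeff (B n) k = 0" if "n < k" for n k
    using M that unfolding MPS_def by (metis coeff_eq_0)
  have lin: "lin_functional v" using O by (rule lin_of_ortho)
  have B0: "B 0 = 1" by (rule MPS_B0[OF M])
  obtain s1 t1 where R1: "[:0,1:] * B 1 = B 2 + smult s1 (B 1) + smult t1 (B 0)"
    using ortho_rec[OF O M, of 0] by (auto simp: numeral_2_eq_2)
  obtain s2 t2 where R2: "[:0,1:] * B 2 = B 3 + smult s2 (B 2) + smult t2 (B 1)"
    using ortho_rec[OF O M, of 1] by (auto simp: eval_nat_numeral)
  obtain s3 t3 where R3: "[:0,1:] * B 3 = B 4 + smult s3 (B 3) + smult t3 (B 2)"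
    using ortho_rec[OF O M, of 2] by (auto simp: eval_nat_numeral)
  obtain s4 t4 where R4: "[:0,1:] * B 4 = B 5 + smult s4 (B 4) + smult t4 (B 3)"
    using ortho_rec[OF O M, of 3] by (auto simp: eval_nat_numeral)
  have t1: "t1 \<noteq> 0"
  proof
    assume t0: "t1 = 0"
    have B1: "B 1 = [:coeff (B 1) 0, 1:]"
    proof (rule poly_eqI)
      fix k show "coeff (B 1) k = coeff [:coeff (B 1) 0, 1:] k"
        by (cases k) (auto simp: d1 d0 coeff_pCons split: nat.split)
    qed
    have e: "[:0,1:] * B 1 = B 1 * B 1 - smult (coeff (B 1) 0) (B 1)"
      by (subst (2 3 4) B1) (simp add: algebra_simps)
    have orth: "\<forall>n m. n \<noteq> m \<longrightarrow> v (B n * B m) = 0" and nrm: "v (B 1 * B 1) \<noteq> 0"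
      using O unfolding orthogonal_wrt_def by auto
    have v1: "v (B 1) = 0" "v (B 2) = 0" using orth B0 by (metis mult.right_neutral one_neq_zero zero_neq_numeral)+
    have "v ([:0,1:] * B 1) = v (B 1 * B 1)" using e v1 by (simp add: lin_diff[OF lin] lin_smult[OF lin])
    moreover have "v ([:0,1:] * B 1) = 0" using R1 t0 v1 by (simp add: lin_add[OF lin] lin_smult[OF lin])
    ultimately show False using nrm by simp
  qed
  have l: "lam a0 a1 1 = a0 + a1" "lam a0 a1 2 = 2*(a0+2*a1)" "lam a0 a1 3 = 3*(a0+3*a1)"
     "lam a0 a1 4 = 4*(a0+4*a1)" "lam a0 a1 5 = 5*(a0+5*a1)"
    by (simp_all add: lam_def algebra_simps)
  have nzl: "lam a0 a1 1 \<noteq> 0" "lam a0 a1 2 \<noteq> 0" "lam a0 a1 3 \<noteq> 0"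
    using nz[rule_format, of 1] nz[rule_format, of 2] nz[rule_format, of 3] unfolding lam_def
    by (simp_all only: mult_eq_0_iff of_nat_eq_0_iff) simp_all
  have AP: "lam a0 a1 (Suc k) * coeff (B (Suc n)) (Suc k) = lam a0 a1 (Suc n) * coeff (B n) k" for n k
    by (rule appell_coeff[OF A])
  show ?thesis
  proof (rule alg_crux[OF l a1 nzl])
    show "lam a0 a1 1 * coeff (B 2) 1 = lam a0 a1 2 * coeff (B 1) 0" using AP[of 0 1] by (simp add: eval_nat_numeral)
    show "lam a0 a1 2 * coeff (B 3) 2 = lam a0 a1 3 * coeff (B 2) 1" using AP[of 1 2] by (simp add: eval_nat_numeral)
    show "lam a0 a1 1 * coeff (B 3) 1 = lam a0 a1 3 * coeff (B 2) 0" using AP[of 0 2] by (simp add: eval_nat_numeral)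
    show "lam a0 a1 3 * coeff (B 4) 3 = lam a0 a1 4 * coeff (B 3) 2" using AP[of 2 3] by (simp add: eval_nat_numeral)
    show "lam a0 a1 2 * coeff (B 4) 2 = lam a0 a1 4 * coeff (B 3) 1" using AP[of 1 3] by (simp add: eval_nat_numeral)
    show "lam a0 a1 1 * coeff (B 4) 1 = lam a0 a1 4 * coeff (B 3) 0" using AP[of 0 3] by (simp add: eval_nat_numeral)
    show "lam a0 a1 3 * coeff (B 5) 3 = lam a0 a1 5 * coeff (B 4) 2" using AP[of 2 4] by (simp add: eval_nat_numeral)
    show "lam a0 a1 1 * coeff (B 5) 1 = lam a0 a1 5 * coeff (B 4) 0" using AP[of 0 4] by (simp add: eval_nat_numeral)
    show "coeff (B 1) 0 = coeff (B 2) 1 + s1" using recc[OF R1, of 1] by (simp add: d1 d0)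
    show "0 = coeff (B 2) 0 + s1 * coeff (B 1) 0 + t1" using recc[OF R1, of 0] by (simp add: d1 d0 B0)
    show "coeff (B 2) 1 = coeff (B 3) 2 + s2" using recc[OF R2, of 2] by (simp add: d1 d0)
    show "coeff (B 2) 0 = coeff (B 3) 1 + s2 * coeff (B 2) 1 + t2" using recc[OF R2, of 1] by (simp add: d1 d0)
    show "0 = coeff (B 3) 0 + s2 * coeff (B 2) 0 + t2 * coeff (B 1) 0" using recc[OF R2, of 0] by (simp add: d1 d0)
    show "coeff (B 3) 2 = coeff (B 4) 3 + s3" using recc[OF R3, of 3] by (simp add: d1 d0)
    show "coeff (B 3) 1 = coeff (B 4) 2 + s3 * coeff (B 3) 2 + t3" using recc[OF R3, of 2] by (simp add: d1 d0)
    show "coeff (B 3) 0 = coeff (B 4) 1 + s3 * coeff (B 3) 1 + t3 * coeff (B 2) 1" using recc[OF R3, of 1] by (simp add: d1 d0)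
    show "0 = coeff (B 4) 0 + s3 * coeff (B 3) 0 + t3 * coeff (B 2) 0" using recc[OF R3, of 0] by (simp add: d1 d0)
    show "coeff (B 4) 2 = coeff (B 5) 3 + s4 * coeff (B 4) 3 + t4" using recc[OF R4, of 3] by (simp add: d1 d0)
    show "coeff (B 4) 0 = coeff (B 5) 1 + s4 * coeff (B 4) 1 + t4 * coeff (B 3) 1" using recc[OF R4, of 1] by (simp add: d1 d0)
  qed (rule t1)
qed

lemma lam_nz:
  assumes "\<forall>n::nat. n \<ge> 1 \<longrightarrow> a0 + a1 * of_nat n \<noteq> 0"
  shows "lam a0 a1 (Suc j) \<noteq> 0"
  using assms[rule_format, of "Suc j"] unfolding lam_def
  by (simp only: mult_eq_0_iff of_nat_eq_0_iff) simp

lemma appell_nonconst: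
  assumes nz: "\<forall>n::nat. n \<ge> 1 \<longrightarrow> a0 + a1 * of_nat n \<noteq> 0"
    and A: "Lambda_Appell a0 a1 B" "Lambda_Appell a0 a1 S" and e: "B n = S n"
  shows "coeff (B (Suc n)) (Suc j) = coeff (S (Suc n)) (Suc j)"
proof -
  have "lam a0 a1 (Suc j) * coeff (B (Suc n)) (Suc j) = lam a0 a1 (Suc j) * coeff (S (Suc n)) (Suc j)"
    using appell_coeff[OF A(1), of j n] appell_coeff[OF A(2), of j n] e by simp
  then show ?thesis using lam_nz[OF nz] by simp
qed

lemma appell_step:
  assumes nz: "\<forall>n::nat. n \<ge> 1 \<longrightarrow> a0 + a1 * of_nat n \<noteq> 0"
    and A: "Lambda_Appell a0 a1 B" "Lambda_Appell a0 a1 S" and e: "B n = S n"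
    and c: "coeff (B (Suc n)) 0 = coeff (S (Suc n)) 0"
  shows "B (Suc n) = S (Suc n)"
proof (rule poly_eqI)
  fix k show "coeff (B (Suc n)) k = coeff (S (Suc n)) k"
    using c appell_nonconst[OF nz A e] by (cases k) auto
qed

lemma uniq_appell:
  assumes nz: "\<forall>n::nat. n \<ge> 1 \<longrightarrow> a0 + a1 * of_nat n \<noteq> 0"
    and A: "Lambda_Appell a0 a1 B" "Lambda_Appell a0 a1 S"
    and O: "orthogonal_wrt v B" "orthogonal_wrt w S"
    and c1: "coeff (B 1) 0 = coeff (S 1) 0" and c2: "coeff (B 2) 0 = coeff (S 2) 0"
  shows "B = S"
proof -
  have MB: "MPS B" and MS: "MPS S" using A unfolding Lambda_Appell_def by auto
  have d1: "coeff (B n) n = 1" "coeff (S n) n = 1" for n using MB MS unfolding MPS_def by metis+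
  have d0: "coeff (B n) k = 0" "coeff (S n) k = 0" if "n < k" for n k
    using MB MS that unfolding MPS_def by (metis coeff_eq_0)+
  have "\<forall>k\<le>Suc (Suc m). B k = S k" for m
  proof (induction m)
    case 0
    have e0: "B 0 = S 0" using MPS_B0[OF MB] MPS_B0[OF MS] by simp
    have e1: "B (Suc 0) = S (Suc 0)" using appell_step[OF nz A e0] c1 by simp
    have e2: "B (Suc (Suc 0)) = S (Suc (Suc 0))" using appell_step[OF nz A e1] c2 by (simp add: numeral_2_eq_2)
    show ?case using e0 e1 e2 by (auto simp: le_Suc_eq)
  next
    case (Suc m)
    let ?N = "Suc (Suc m)"
    have eN: "B ?N = S ?N" and eM: "B (Suc m) = S (Suc m)" using Suc.IH by auto
    obtain s t where RB: "[:0,1:] * B ?N = B (Suc ?N) + smult s (B ?N) + smult t (B (Suc m))"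
      using ortho_rec[OF O(1) MB, of "Suc m"] by blast
    obtain s' t' where RS: "[:0,1:] * S ?N = S (Suc ?N) + smult s' (S ?N) + smult t' (S (Suc m))"
      using ortho_rec[OF O(2) MS, of "Suc m"] by blast
    have nc: "coeff (B (Suc ?N)) (Suc j) = coeff (S (Suc ?N)) (Suc j)" for j
      by (rule appell_nonconst[OF nz A eN])
    have "coeff (B ?N) (Suc m) = coeff (B (Suc ?N)) ?N + s"
      using recc[OF RB, of ?N] by (simp add: d1 d0)
    moreover have "coeff (S ?N) (Suc m) = coeff (S (Suc ?N)) ?N + s'"
      using recc[OF RS, of ?N] by (simp add: d1 d0)
    ultimately have ss: "s = s'" using nc[of "Suc m"] eN by simp
    have "coeff (B ?N) m = coeff (B (Suc ?N)) (Suc m) + s * coeff (B ?N) (Suc m) + t"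
      using recc[OF RB, of "Suc m"] by (simp add: d1 d0)
    moreover have "coeff (S ?N) m = coeff (S (Suc ?N)) (Suc m) + s' * coeff (S ?N) (Suc m) + t'"
      using recc[OF RS, of "Suc m"] by (simp add: d1 d0)
    ultimately have tt: "t = t'" using nc[of m] eN ss by simp
    have "0 = coeff (B (Suc ?N)) 0 + s * coeff (B ?N) 0 + t * coeff (B (Suc m)) 0"
      using recc[OF RB, of 0] by simp
    moreover have "0 = coeff (S (Suc ?N)) 0 + s' * coeff (S ?N) 0 + t' * coeff (S (Suc m)) 0"
      using recc[OF RS, of 0] by simp
    ultimately have "coeff (B (Suc ?N)) 0 = coeff (S (Suc ?N)) 0" using ss tt eN eM
      by (metis add_right_cancel add.commute)
    then have "B (Suc ?N) = S (Suc ?N)" by (rule appell_step[OF nz A eN])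
    then show ?case using Suc.IH by (auto simp: le_Suc_eq)
  qed
  note all = this
  show ?thesis
  proof (rule ext)
    fix k show "B k = S k" using all[of k] by simp
  qed
qed

lemma coeff_aff: "coeff (affine_transform c 0 B n) k = inverse (c ^ n) * c ^ k * coeff (B n) k"
  by (simp add: affine_transform_def coeff_pcompose_linear)

lemma aff_MPS:
  assumes "c \<noteq> 0" "MPS B"
  shows "MPS (affine_transform c 0 B)"
  unfolding MPS_def
proof
  fix n
  have dB: "degree (B n) = n" "coeff (B n) n = 1" using assms(2) unfolding MPS_def by metis+
  have "degree (affine_transform c 0 B n) = n"
    using assms(1) dB by (simp add: affine_transform_def degree_pcompose)
  then show "degree (affine_transform c 0 B n) = n \<and> lead_coeff (affine_transform c 0 B n) = 1"
    using assms(1) dB by (simp add: coeff_aff)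
qed

lemma aff_appell:
  assumes "c \<noteq> 0" "Lambda_Appell a0 a1 B"
  shows "Lambda_Appell a0 a1 (affine_transform c 0 B)"
  unfolding Lambda_Appell_def
proof (intro conjI allI)
  show "MPS (affine_transform c 0 B)" using assms aff_MPS unfolding Lambda_Appell_def by blast
next
  fix n
  show "Lam a0 a1 (affine_transform c 0 B (Suc n)) = smult (rho a0 a1 n) (affine_transform c 0 B n)"
  proof (rule poly_eqI)
    fix k
    have "coeff (Lam a0 a1 (affine_transform c 0 B (Suc n))) k
        = inverse (c ^ Suc n) * c ^ Suc k * (lam a0 a1 (Suc k) * coeff (B (Suc n)) (Suc k))"
      by (simp add: coeff_Lam coeff_aff mult_ac)
    also have "\<dots> = inverse (c ^ Suc n) * c ^ Suc k * (rho a0 a1 n * coeff (B n) k)"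
      using appell_coeff[OF assms(2), of k n] by (simp add: rho_lam)
    also have "\<dots> = coeff (smult (rho a0 a1 n) (affine_transform c 0 B n)) k"
      using assms(1) by (simp add: coeff_aff field_simps)
    finally show "coeff (Lam a0 a1 (affine_transform c 0 B (Suc n))) k = coeff (smult (rho a0 a1 n) (affine_transform c 0 B n)) k" .
  qed
qed

lemma aff_ortho:
  assumes "c \<noteq> 0" "orthogonal_wrt u B"
  shows "orthogonal_wrt (\<lambda>p. u (pcompose p [:0, inverse c:])) (affine_transform c 0 B)"
proof -
  have lin: "lin_functional u" using assms(2) by (rule lin_of_ortho)
  have cc: "pcompose [:0, c:] [:0, inverse c:] = [:0, 1:]" using assms(1) by (simp add: pcompose_pCons)
  have key: "pcompose (affine_transform c 0 B n * affine_transform c 0 B m) [:0, inverse c:]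
       = smult (inverse (c ^ n) * inverse (c ^ m)) (B n * B m)" for n m
  proof -
    have "affine_transform c 0 B n * affine_transform c 0 B m
        = smult (inverse (c ^ n) * inverse (c ^ m)) (pcompose (B n * B m) [:0, c:])"
      by (simp add: affine_transform_def pcompose_mult mult_ac)
    then show ?thesis by (simp add: pcompose_smult pcompose_assoc[symmetric] cc)
  qed
  show ?thesis unfolding orthogonal_wrt_def
  proof (intro conjI allI impI)
    show "lin_functional (\<lambda>p. u (pcompose p [:0, inverse c:]))"
      unfolding lin_functional_def by (simp add: pcompose_add pcompose_smult lin_add[OF lin] lin_smult[OF lin])
  next
    fix n m :: nat assume "n \<noteq> m"
    then show "u (pcompose (affine_transform c 0 B n * affine_transform c 0 B m) [:0, inverse c:]) = 0"
      using assms(2) unfolding key orthogonal_wrt_def by (simp add: lin_smult[OF lin])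
  next
    fix n
    show "u (pcompose (affine_transform c 0 B n * affine_transform c 0 B n) [:0, inverse c:]) \<noteq> 0"
      using assms unfolding key orthogonal_wrt_def by (simp add: lin_smult[OF lin])
  qed
qed

lemma part3:
  assumes a1: "a1 \<noteq> 0" and nz: "\<forall>n::nat. n \<ge> 1 \<longrightarrow> a0 + a1 * of_nat n \<noteq> 0"
    and A: "Lambda_Appell a0 a1 B" and OM: "orthogonal_MPS B"
  shows "\<exists>L c d. is_laguerre (a0 / a1) L \<and> c \<noteq> 0 \<and> B = affine_transform c d L"
proof -
  obtain v where O: "orthogonal_wrt v B" using OM unfolding orthogonal_MPS_def by blast
  define b1 where "b1 = coeff (B 1) 0"
  define b2 where "b2 = coeff (B 2) 0"
  have cr: "b1 \<noteq> 0" "2 * lam a0 a1 1 * b2 = lam a0 a1 2 * b1^2"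
    using crux[OF a1 nz A O] unfolding b1_def b2_def by auto
  define \<alpha> where "\<alpha> = a0 / a1"
  have e: "a0 = a1 * \<alpha>" using a1 by (simp add: \<alpha>_def)
  have h1: "\<alpha> + 1 \<noteq> 0"
  proof
    assume "\<alpha> + 1 = 0"
    moreover have "a0 + a1 = a1 * (\<alpha> + 1)" using e by (simp add: algebra_simps)
    ultimately have "a0 + a1 = 0" by simp
    then show False using nz[rule_format, of 1] by simp
  qed
  have h1': "- 1 - \<alpha> \<noteq> 0"
  proof
    assume "- 1 - \<alpha> = 0" then have "\<alpha> + 1 = 0" by (metis add.commute diff_add_cancel diff_0 minus_diff_eq)
    then show False using h1 by simp
  qed
  define c where "c = - (\<alpha> + 1) / b1"
  have c0: "c \<noteq> 0" using h1 cr(1) unfolding c_def by (metis divide_eq_0_iff neg_equal_0_iff_equal)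
  define S where "S = affine_transform c 0 (Lag \<alpha>)"
  have AL: "Lambda_Appell a0 a1 (Lag \<alpha>)"
    unfolding Lambda_Appell_def using MPS_Lag Lag_appell[OF e] by blast
  have OL: "orthogonal_wrt (U \<alpha>) (Lag \<alpha>)"
    unfolding orthogonal_wrt_def using lin_U Lag_pair Lag_norm[OF a1 e nz] by blast
  have AS: "Lambda_Appell a0 a1 S" unfolding S_def by (rule aff_appell[OF c0 AL])
  have OS: "orthogonal_wrt (\<lambda>p. U \<alpha> (pcompose p [:0, inverse c:])) S"
    unfolding S_def by (rule aff_ortho[OF c0 OL])
  have LC10: "LC \<alpha> 1 0 = - (\<alpha> + 1)" by (simp add: LC_def)
  have LC20: "LC \<alpha> 2 0 = (\<alpha> + 1) * (\<alpha> + 2)"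
    by (simp add: LC_def numeral_2_eq_2 pochhammer_rec algebra_simps)
  have LC10': "LC \<alpha> (Suc 0) 0 = - (\<alpha> + 1)" by (simp add: LC_def)
  have b1': "coeff (B (Suc 0)) 0 = b1" by (simp add: b1_def)
  have h1'': "- \<alpha> \<noteq> 1"
  proof
    assume "- \<alpha> = 1" then have "\<alpha> = -1" by (metis minus_minus)
    then show False using h1 by simp
  qed
  have "coeff (S 1) 0 = inverse c * (- (\<alpha> + 1))"
    unfolding S_def coeff_aff by (simp add: coeff_Lag LC10')
  also have "\<dots> = b1" unfolding c_def using h1 h1'' cr(1) by (simp add: inverse_eq_divide)
  finally have c1: "coeff (B 1) 0 = coeff (S 1) 0" by (simp add: b1_def)
  have b2: "b2 = (\<alpha> + 2) * b1^2 / (\<alpha> + 1)"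
  proof -
    have "2 * (a1 * (\<alpha> + 1)) * b2 = 2 * (a1 * (\<alpha> + 2)) * b1^2"
      using cr(2) e by (simp add: lam_def algebra_simps)
    then have "(\<alpha> + 1) * b2 = (\<alpha> + 2) * b1^2" using a1 by simp
    then show ?thesis using h1 by (simp add: field_simps)
  qed
  have "coeff (S 2) 0 = inverse (c^2) * ((\<alpha> + 1) * (\<alpha> + 2))"
    unfolding S_def coeff_aff by (simp add: coeff_Lag LC20)
  also have "inverse (c^2) = b1^2 / (\<alpha> + 1)^2"
  proof -
    have "(- \<alpha> - 1)^2 = (\<alpha> + 1)^2" by (simp add: power2_eq_square algebra_simps)
    then show ?thesis unfolding c_def by (simp add: power_divide inverse_eq_divide)
  qed
  also have "b1^2 / (\<alpha> + 1)^2 * ((\<alpha> + 1) * (\<alpha> + 2)) = (\<alpha> + 2) * b1^2 / (\<alpha> + 1)"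
  proof -
    have "(\<alpha> + 1)^2 = (\<alpha> + 1) * (\<alpha> + 1)" by (rule power2_eq_square)
    then show ?thesis using h1 by simp
  qed
  finally have c2: "coeff (B 2) 0 = coeff (S 2) 0" using b2 by (simp add: b2_def)
  have "B = S" by (rule uniq_appell[OF nz A AS O OS c1 c2])
  moreover have "is_laguerre (a0 / a1) (Lag \<alpha>)" using part1[OF a1 nz] by (simp add: \<alpha>_def)
  ultimately show ?thesis using c0 unfolding S_def by blast
qed

theorem proposition8:
  fixes a0 a1 :: complex
  assumes "a1 \<noteq> 0"
    and "\<forall>n::nat. n \<ge> 1 \<longrightarrow> a0 + a1 * of_nat n \<noteq> 0"
  shows "(\<exists>L. is_laguerre (a0 / a1) L)
    \<and> (\<forall>L. is_laguerre (a0 / a1) L \<longrightarrow> Lambda_Appell a0 a1 L \<and> orthogonal_MPS L)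
    \<and> (\<forall>B. Lambda_Appell a0 a1 B \<and> orthogonal_MPS B \<longrightarrow>
          (\<exists>L c d. is_laguerre (a0 / a1) L \<and> c \<noteq> 0 \<and> B = affine_transform c d L))"
  using part1[OF assms] part2[OF assms(1)] part3[OF assms] by blast

end
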